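(* Let $f:\{0,1\}^N\to\{0,1\}$ be a partial function, and let $x\in\mathrm{Dom}(f)$. If $f(x)=0$, then \[\mathrm{C}_f(x)\leq\mathrm{RC}_f(x)(1+\log|f^{-1}(1)|)\] and if $f(x)=1$, then \[\mathrm{C}_f(x)\leq\mathrm{RC}_f(x)(1+\log|f^{-1}(0)|).\]
   Context: $\mathrm{C}_f(x)$ is the certificate complexity of $f$ at $x$ (minimum size of a partial assignment consistent with $x$ on which $f$ is constant over $\mathrm{Dom}(f)$). $\mathrm{RC}_f(x)$ is the randomized certificate complexity of $f$ at $x$, defined as the fractional block sensitivity of $x$ (the fractional packing number of the sensitive blocks of $x$). Logarithms are base 2. *)

theory Defs
  imports Complex_Main
begin

text \<open>Inputs in {0,1}^N are Boolean lists of length N (True = 1, False = 0).\<close>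

definition dom_f :: "nat \<Rightarrow> (bool list \<Rightarrow> bool option) \<Rightarrow> bool list set" where
  "dom_f N f = {x. length x = N \<and> f x \<noteq> None}"

definition preimage_f :: "nat \<Rightarrow> (bool list \<Rightarrow> bool option) \<Rightarrow> bool \<Rightarrow> bool list set" where
  "preimage_f N f b = {y \<in> dom_f N f. f y = Some b}"

text \<open>A certificate for x: a set S of positions (the partial assignment x restricted to S)
such that f is constant on all domain points consistent with it.\<close>
definition is_certificate :: "nat \<Rightarrow> (bool list \<Rightarrow> bool option) \<Rightarrow> bool list \<Rightarrow> nat set \<Rightarrow> bool" where
  "is_certificate N f x S \<longleftrightarrow> S \<subseteq> {..<N} \<and>
     (\<forall>y \<in> dom_f N f. \<forall>z \<in> dom_f N f.
        (\<forall>i \<in> S. y ! i = x ! i) \<longrightarrow> (\<forall>i \<in> S. z ! i = x ! i) \<longrightarrow> f y = f z)"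

definition cert_complexity :: "nat \<Rightarrow> (bool list \<Rightarrow> bool option) \<Rightarrow> bool list \<Rightarrow> nat" where
  "cert_complexity N f x = Min (card ` {S. is_certificate N f x S})"

definition flip_block :: "bool list \<Rightarrow> nat set \<Rightarrow> bool list" where
  "flip_block x B = map (\<lambda>i. if i \<in> B then \<not> x ! i else x ! i) [0..<length x]"

definition sensitive_blocks :: "nat \<Rightarrow> (bool list \<Rightarrow> bool option) \<Rightarrow> bool list \<Rightarrow> nat set set" where
  "sensitive_blocks N f x = {B. B \<subseteq> {..<N} \<and> flip_block x B \<in> dom_f N f \<and> f (flip_block x B) \<noteq> f x}"

text \<open>Fractional block sensitivity = fractional packing number of the sensitive blocks.\<close>
definition frac_packing :: "nat \<Rightarrow> (bool list \<Rightarrow> bool option) \<Rightarrow> bool list \<Rightarrow> (nat set \<Rightarrow> real) \<Rightarrow> bool" where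
  "frac_packing N f x w \<longleftrightarrow> (\<forall>B \<in> sensitive_blocks N f x. w B \<ge> 0) \<and>
     (\<forall>i < N. (\<Sum>B \<in> {B \<in> sensitive_blocks N f x. i \<in> B}. w B) \<le> 1)"

definition RC :: "nat \<Rightarrow> (bool list \<Rightarrow> bool option) \<Rightarrow> bool list \<Rightarrow> real" where
  "RC N f x = Sup {(\<Sum>B \<in> sensitive_blocks N f x. w B) | w. frac_packing N f x w}"

end

theory Submission
  imports Defs
begin
definition gg :: "nat \<Rightarrow> real" where
  "gg n = (if n = 0 then 0 else 1 + log 2 (real n))"

lemma gg_nonneg: "gg n \<ge> 0"
  by (simp add: gg_def)

lemma gg_mono: "a \<le> b \<Longrightarrow> gg a \<le> gg b"
  by (auto simp: gg_def)

lemma log2_ge_ln: "(y::real) \<ge> 1 \<Longrightarrow> ln y \<le> log 2 y"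
proof -
  assume y: "y \<ge> 1"
  have l: "0 < ln (2::real)" "ln (2::real) \<le> 1" using ln_le_minus_one[of 2] by auto
  have "ln y \<ge> 0" using y by simp
  then have "ln y * ln 2 \<le> ln y" using l by (simp add: mult_left_le)
  then show ?thesis using l by (simp add: log_def pos_le_divide_eq)
qed

lemma gg_step:
  assumes "c > 0"
  shows "real c / real (c + k) \<le> gg (c + k) - gg k"
proof (cases "k = 0")
  case True
  then show ?thesis using assms by (simp add: gg_def)
next
  case False
  have pos: "real k > 0" "real (c+k) > 0" using False by auto
  have "1 - real k / real (c+k) \<le> ln (real (c+k) / real k)"
  proof -
    have "ln (real k / real (c+k)) \<le> real k / real (c+k) - 1"
      using pos by (intro ln_le_minus_one) simp
    moreover have "ln (real k / real (c+k)) = - ln (real (c+k) / real k)"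
      using pos by (simp add: ln_div)
    ultimately show ?thesis by simp
  qed
  also have "\<dots> \<le> log 2 (real (c+k) / real k)"
    using pos by (intro log2_ge_ln) simp
  also have "\<dots> = gg (c+k) - gg k"
    using pos False by (simp add: gg_def log_divide_pos)
  finally show ?thesis using pos by (simp add: field_simps)
qed


lemma greedy:
  fixes U :: "'a set" and F :: "'a set set"
  assumes "finite U" "finite F" "\<forall>B\<in>F. B \<subseteq> U \<and> B \<noteq> {}"
  shows "\<exists>S p. S \<subseteq> U \<and> (\<forall>B\<in>F. S \<inter> B \<noteq> {}) \<and> (\<forall>B\<in>F. p B \<ge> (0::real))
     \<and> (\<forall>j\<in>U. (\<Sum>B\<in>{B\<in>F. j\<in>B}. p B) \<le> gg (card {B\<in>F. j\<in>B}))
     \<and> real (card S) \<le> (\<Sum>B\<in>F. p B)"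
  using assms(2,3)
proof (induction "card F" arbitrary: F rule: less_induct)
  case less
  show ?case
  proof (cases "F = {}")
    case True
    then show ?thesis by (intro exI[of _ "{}"] exI[of _ "\<lambda>_. 0"]) (simp add: gg_def)
  next
    case False
    then obtain B0 where B0: "B0 \<in> F" by auto
    then obtain i0 where i0: "i0 \<in> B0" using less.prems by blast
    define h where "h j = card {B\<in>F. j\<in>B}" for j
    have Une: "U \<noteq> {}" using i0 B0 less.prems by blast
    define d where "d = Max (h ` U)"
    have "d \<in> h ` U" unfolding d_def using assms(1) Une by (intro Max_in) auto
    then obtain i where i: "i \<in> U" "h i = d" by auto
    have hmax: "h j \<le> d" if "j \<in> U" for j
      unfolding d_def using assms(1) that by simp
    have "h i0 \<ge> 1" unfolding h_def using B0 i0 less.prems(1)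
      by (metis (mono_tags, lifting) One_nat_def Suc_leI card_gt_0_iff empty_iff finite_subset mem_Collect_eq subsetI)
    moreover have "i0 \<in> U" using B0 i0 less.prems by blast
    ultimately have d1: "d \<ge> 1" using hmax by (meson le_trans)
    define F' where "F' = {B\<in>F. i\<notin>B}"
    have "card {B\<in>F. i\<in>B} \<noteq> 0" using d1 i unfolding h_def by auto
    then have "{B\<in>F. i\<in>B} \<noteq> {}" by (metis card.empty)
    then have "F' \<subset> F" unfolding F'_def by auto
    then have cF: "card F' < card F" using less.prems(1) by (simp add: psubset_card_mono)
    obtain S' p' where IH: "S' \<subseteq> U" "\<forall>B\<in>F'. S' \<inter> B \<noteq> {}" "\<forall>B\<in>F'. p' B \<ge> (0::real)"
      "\<forall>j\<in>U. (\<Sum>B\<in>{B\<in>F'. j\<in>B}. p' B) \<le> gg (card {B\<in>F'. j\<in>B})"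
      "real (card S') \<le> (\<Sum>B\<in>F'. p' B)"
      using less.hyps[OF cF] less.prems F'_def by auto
    define p where "p B = (if i \<in> B then 1 / real d else p' B)" for B
    define S where "S = insert i S'"
    have fin: "finite F" by fact
    have "S \<subseteq> U" using IH i unfolding S_def by auto
    moreover have "\<forall>B\<in>F. S \<inter> B \<noteq> {}" using IH(2) unfolding S_def F'_def by auto
    moreover have "\<forall>B\<in>F. p B \<ge> 0" using IH(3) unfolding p_def F'_def by auto
    moreover have "real (card S) \<le> (\<Sum>B\<in>F. p B)"
    proof -
      have "(\<Sum>B\<in>F. p B) = (\<Sum>B\<in>F \<inter> {B. i\<in>B}. 1 / real d) + (\<Sum>B\<in>F \<inter> - {B. i\<in>B}. p' B)"
        unfolding p_def using fin by (rule sum.If_cases)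
      also have "F \<inter> - {B. i\<in>B} = F'" unfolding F'_def by auto
      also have "(\<Sum>B\<in>F \<inter> {B. i\<in>B}. 1 / real d) = 1"
      proof -
        have "card (F \<inter> {B. i\<in>B}) = d" using i unfolding h_def by (metis Collect_conj_eq Collect_mem_eq)
        then show ?thesis using d1 by simp
      qed
      finally have "(\<Sum>B\<in>F. p B) = 1 + (\<Sum>B\<in>F'. p' B)" .
      moreover have "card S \<le> card S' + 1" unfolding S_def by (simp add: card_insert_le_m1)
      ultimately show ?thesis using IH(5) by linarith
    qed
    moreover have "\<forall>j\<in>U. (\<Sum>B\<in>{B\<in>F. j\<in>B}. p B) \<le> gg (card {B\<in>F. j\<in>B})"
    proof
      fix j assume j: "j \<in> U"
      define A where "A = {B\<in>F. j\<in>B}"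
      have finA: "finite A" using fin unfolding A_def by simp
      have "(\<Sum>B\<in>A. p B) = (\<Sum>B\<in>A \<inter> {B. i\<in>B}. 1 / real d) + (\<Sum>B\<in>A \<inter> - {B. i\<in>B}. p' B)"
        unfolding p_def using finA by (rule sum.If_cases)
      also have "A \<inter> - {B. i\<in>B} = {B\<in>F'. j\<in>B}" unfolding F'_def A_def by auto
      finally have eq: "(\<Sum>B\<in>A. p B) = real (card (A \<inter> {B. i\<in>B})) / real d + (\<Sum>B\<in>{B\<in>F'. j\<in>B}. p' B)"
        by simp
      define c where "c = card (A \<inter> {B. i\<in>B})"
      define k where "k = card {B\<in>F'. j\<in>B}"
      have cA: "card A = c + k"
      proof -
        have "card A = card (A \<inter> {B. i\<in>B}) + card (A \<inter> - {B. i\<in>B})"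
          using finA by (metis card_Int_Diff Diff_eq)  
        also have "A \<inter> - {B. i\<in>B} = {B\<in>F'. j\<in>B}" unfolding F'_def A_def by auto
        finally show ?thesis unfolding c_def k_def .
      qed
      have cd: "c + k \<le> d" using hmax[OF j] cA unfolding h_def A_def by simp
      have "(\<Sum>B\<in>A. p B) \<le> real c / real d + gg k"
        using eq IH(4) j unfolding c_def k_def by auto
      also have "\<dots> \<le> gg (c + k)"
      proof (cases "c = 0")
        case True then show ?thesis by simp
      next
        case False
        have "real c / real d \<le> real c / real (c + k)"
          using cd False by (intro divide_left_mono) auto
        also have "\<dots> \<le> gg (c+k) - gg k" using False by (intro gg_step) simp
        finally show ?thesis by simp
      qed
      finally show "(\<Sum>B\<in>{B\<in>F. j\<in>B}. p B) \<le> gg (card {B\<in>F. j\<in>B})"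
        using cA unfolding A_def by simp
    qed
    ultimately show ?thesis by blast
  qed
qed


lemma dom_len: "y \<in> dom_f N f \<Longrightarrow> length y = N"
  by (simp add: dom_f_def)

lemma flip_len[simp]: "length (flip_block x B) = length x"
  by (simp add: flip_block_def)

lemma flip_nth: "i < length x \<Longrightarrow> flip_block x B ! i = (if i \<in> B then \<not> x ! i else x ! i)"
  by (simp add: flip_block_def)

lemma sens_sub: "sensitive_blocks N f x \<subseteq> Pow {..<N}"
  by (auto simp: sensitive_blocks_def)

lemma sens_fin: "finite (sensitive_blocks N f x)"
  using sens_sub by (rule finite_subset) simp

lemma sens_ne: "B \<in> sensitive_blocks N f x \<Longrightarrow> B \<noteq> {}"
proof (rule notI)
  assume "B \<in> sensitive_blocks N f x" "B = {}"
  moreover have "flip_block x {} = x"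
    unfolding flip_block_def by (simp add: map_nth)
  ultimately show False by (simp add: sensitive_blocks_def)
qed

lemma hitting_cert:
  assumes x: "x \<in> dom_f N f" and S: "S \<subseteq> {..<N}"
    and hit: "\<forall>B\<in>sensitive_blocks N f x. S \<inter> B \<noteq> {}"
  shows "is_certificate N f x S"
proof -
  have key: "f y = f x" if y: "y \<in> dom_f N f" "\<forall>i\<in>S. y ! i = x ! i" for y
  proof (rule ccontr)
    assume ne: "f y \<noteq> f x"
    define B where "B = {i. i < N \<and> y ! i \<noteq> x ! i}"
    have lx: "length x = N" and ly: "length y = N" using x y dom_len by auto
    have "flip_block x B = y"
      using lx ly by (intro nth_equalityI) (auto simp: flip_nth B_def)
    then have "B \<in> sensitive_blocks N f x" using y ne by (auto simp: sensitive_blocks_def B_def)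
    then obtain i where "i \<in> S" "i \<in> B" using hit by blast
    then show False using y(2) B_def by auto
  qed
  show ?thesis unfolding is_certificate_def using S key by auto
qed

lemma cert_le:
  assumes x: "x \<in> dom_f N f" and S: "S \<subseteq> {..<N}"
    and hit: "\<forall>B\<in>sensitive_blocks N f x. S \<inter> B \<noteq> {}"
  shows "cert_complexity N f x \<le> card S"
proof -
  have "{S. is_certificate N f x S} \<subseteq> Pow {..<N}" by (auto simp: is_certificate_def)
  then have "finite {S. is_certificate N f x S}" by (rule finite_subset) simp
  then show ?thesis unfolding cert_complexity_def
    using hitting_cert[OF assms] by (intro Min_le) auto
qed

lemma packing_le_N:
  assumes "frac_packing N f x w"
  shows "(\<Sum>B\<in>sensitive_blocks N f x. w B) \<le> real N"
proof -
  let ?F = "sensitive_blocks N f x"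
  have "(\<Sum>B\<in>?F. w B) \<le> (\<Sum>B\<in>?F. \<Sum>i\<in>{i\<in>{..<N}. i \<in> B}. w B)"
  proof (rule sum_mono)
    fix B assume B: "B \<in> ?F"
    then have "B \<subseteq> {..<N}" "B \<noteq> {}" using sens_ne by (auto simp: sensitive_blocks_def)
    then have "{i\<in>{..<N}. i \<in> B} = B" "card B \<ge> 1"
      by (auto simp: Suc_le_eq card_gt_0_iff intro: finite_subset)
    moreover have "w B \<ge> 0" using assms B by (simp add: frac_packing_def)
    ultimately show "w B \<le> (\<Sum>i\<in>{i\<in>{..<N}. i \<in> B}. w B)"
      by (simp add: mult_le_cancel_right1)
  qed
  also have "\<dots> = (\<Sum>i\<in>{..<N}. \<Sum>B\<in>{B\<in>?F. i\<in>B}. w B)"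
    using sens_fin by (intro sum.swap_restrict) auto
  also have "\<dots> \<le> (\<Sum>i\<in>{..<N}. 1)"
    using assms by (intro sum_mono) (simp add: frac_packing_def)
  finally show ?thesis by simp
qed

lemma RC_ge:
  assumes "frac_packing N f x w"
  shows "(\<Sum>B\<in>sensitive_blocks N f x. w B) \<le> RC N f x"
  unfolding RC_def
proof (rule cSup_upper)
  show "bdd_above {(\<Sum>B\<in>sensitive_blocks N f x. w B) | w. frac_packing N f x w}"
    using packing_le_N by (intro bdd_aboveI[of _ "real N"]) blast
qed (use assms in blast)

lemma card_sens:
  assumes x: "x \<in> dom_f N f" and fx: "f x = Some b"
  shows "card (sensitive_blocks N f x) \<le> card (preimage_f N f (\<not> b))"
proof -
  have lx: "length x = N" using x dom_len by auto
  have "inj_on (flip_block x) (sensitive_blocks N f x)"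
  proof
    fix B1 B2 assume B: "B1 \<in> sensitive_blocks N f x" "B2 \<in> sensitive_blocks N f x"
      and eq: "flip_block x B1 = flip_block x B2"
    have "B1 \<subseteq> {..<N}" "B2 \<subseteq> {..<N}" using B by (auto simp: sensitive_blocks_def)
    moreover have "i \<in> B1 \<longleftrightarrow> i \<in> B2" if "i < N" for i
      using arg_cong[OF eq, of "\<lambda>l. l ! i"] that lx by (auto simp: flip_nth split: if_splits)
    ultimately show "B1 = B2" by blast
  qed
  moreover have "flip_block x ` sensitive_blocks N f x \<subseteq> preimage_f N f (\<not> b)"
  proof
    fix y assume "y \<in> flip_block x ` sensitive_blocks N f x"
    then obtain B where B: "B \<in> sensitive_blocks N f x" "y = flip_block x B" by auto
    then have "y \<in> dom_f N f" "f y \<noteq> Some b" using fx by (auto simp: sensitive_blocks_def)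
    then show "y \<in> preimage_f N f (\<not> b)"
      by (cases "f y") (auto simp: preimage_f_def dom_f_def)
  qed
  moreover have "finite (preimage_f N f (\<not> b))"
  proof -
    have "preimage_f N f (\<not> b) \<subseteq> {l. set l \<subseteq> UNIV \<and> length l = N}"
      by (auto simp: preimage_f_def dom_f_def)
    then show ?thesis using finite_lists_length_eq[of "UNIV :: bool set" N]
      by (rule finite_subset) simp
  qed
  ultimately show ?thesis by (meson card_inj_on_le)
qed

lemma main:
  assumes x: "x \<in> dom_f N f" and fx: "f x = Some b"
  shows "real (cert_complexity N f x) \<le> RC N f x * (1 + log 2 (real (card (preimage_f N f (\<not> b)))))"
proof -
  let ?F = "sensitive_blocks N f x"
  let ?m = "card (preimage_f N f (\<not> b))"
  obtain S p where S: "S \<subseteq> {..<N}" "\<forall>B\<in>?F. S \<inter> B \<noteq> {}" "\<forall>B\<in>?F. p B \<ge> (0::real)"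
     "\<forall>j\<in>{..<N}. (\<Sum>B\<in>{B\<in>?F. j\<in>B}. p B) \<le> gg (card {B\<in>?F. j\<in>B})"
     "real (card S) \<le> (\<Sum>B\<in>?F. p B)"
  proof -
    have "\<forall>B\<in>?F. B \<subseteq> {..<N} \<and> B \<noteq> {}" using sens_ne sens_sub by blast
    from greedy[OF finite_lessThan sens_fin this] show ?thesis using that by blast
  qed
  have C: "real (cert_complexity N f x) \<le> (\<Sum>B\<in>?F. p B)"
    using cert_le[OF x S(1,2)] S(5) by linarith
  have RC0: "RC N f x \<ge> 0"
    using RC_ge[of N f x "\<lambda>_. 0"] by (simp add: frac_packing_def)
  have fac: "1 + log 2 (real ?m) \<ge> 1"
    by (cases "?m = 0") (auto simp: log_def)
  define M where "M = card ?F"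
  show ?thesis
  proof (cases "M = 0")
    case True
    then have "?F = {}" using sens_fin M_def by simp
    then have "real (cert_complexity N f x) \<le> 0" using C by simp
    moreover have "0 \<le> RC N f x * (1 + log 2 (real ?m))" using RC0 fac by simp
    ultimately show ?thesis by linarith
  next
    case False
    have Mm: "M \<le> ?m" using card_sens[OF x fx] M_def by simp
    have "real M \<ge> 1" using False by simp
    then have L: "log 2 (real M) \<ge> 0" by simp
    have "gg M = 1 + log 2 (real M)" using False by (simp add: gg_def)
    with L have G: "gg M > 0" by linarith
    have GM: "gg M \<le> 1 + log 2 (real ?m)" using False Mm by (simp add: gg_def)
    define w where "w B = p B / gg M" for B
    have "frac_packing N f x w" unfolding frac_packing_def
    proof (intro conjI allI impI ballI)
      fix B assume "B \<in> ?F" then show "w B \<ge> 0" using S(3) G by (simp add: w_def)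
    next
      fix i assume i: "i < N"
      have "card {B\<in>?F. i\<in>B} \<le> M" unfolding M_def using sens_fin by (intro card_mono) auto
      then have gm: "gg (card {B\<in>?F. i\<in>B}) \<le> gg M" by (rule gg_mono)
      have "(\<Sum>B\<in>{B\<in>?F. i\<in>B}. p B) \<le> gg (card {B\<in>?F. i\<in>B})" using S(4) i by blast
      then have "(\<Sum>B\<in>{B\<in>?F. i\<in>B}. p B) \<le> gg M" using gm by linarith
      then show "(\<Sum>B\<in>{B\<in>?F. i\<in>B}. w B) \<le> 1"
        using G by (simp add: w_def sum_divide_distrib[symmetric])
    qed
    then have "(\<Sum>B\<in>?F. w B) \<le> RC N f x" by (rule RC_ge)
    then have "(\<Sum>B\<in>?F. p B) / gg M \<le> RC N f x" by (simp add: w_def sum_divide_distrib[symmetric])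
    then have "(\<Sum>B\<in>?F. p B) \<le> RC N f x * gg M" using G by (simp add: pos_divide_le_eq)
    also have "\<dots> \<le> RC N f x * (1 + log 2 (real ?m))" using GM RC0 by (rule mult_left_mono)
    finally show ?thesis using C by linarith
  qed
qed

theorem lemma21:
  fixes N :: nat and f :: "bool list \<Rightarrow> bool option" and x :: "bool list"
  assumes "x \<in> dom_f N f"
  shows "(f x = Some False \<longrightarrow>
           real (cert_complexity N f x) \<le> RC N f x * (1 + log 2 (real (card (preimage_f N f True)))))
       \<and> (f x = Some True \<longrightarrow>
           real (cert_complexity N f x) \<le> RC N f x * (1 + log 2 (real (card (preimage_f N f False)))))"
  using main[OF assms, of False] main[OF assms, of True] by simp

end
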